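(* Let $n\ge0$, $\alpha\ge1$ be integers, $N=2^{n+1}$, $c=2^\alpha+1$, and consider the $c$-DAG over the uniform dataset $\{0,\dots,N-1\}$ (described in the context). Let $s$ be a real number with $1<s\le N$ and $\kappa=\lfloor\log_2(N/s)\rfloor$. If $2^{n-\kappa}<s\le\frac{c-2}{c-1}2^{n-\kappa+1}$, then for every $x\in[0,N-s]$ the query $Q=[x,x+s)$ satisfies $\mathrm{level}_{c\text{-DAG}}(Q)=\kappa$.
   Context: The $c$-DAG over $\mathcal{D}=\{0,\dots,N-1\}\subset[0,N)$ has levels $\ell=0,\dots,n+1$; with $u_\ell=2^{n-\ell+1}/(c-1)$, its level-$\ell$ nodes are the intervals $[mu_\ell,\,mu_\ell+2^{n-\ell+1})$, $m=0,1,\dots,(c-1)2^\ell-(c-1)$ (a node $[a,a+L)$ has children $[a+jL/(2(c-1)),\,a+jL/(2(c-1))+L/2)$, $j=0,\dots,c-1$). SRC-search returns a node of the deepest level whose interval contains $Q$; $\mathrm{level}_{c\text{-DAG}}(Q)$ is the largest $\ell$ such that some level-$\ell$ node contains $Q$. *)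

theory Defs
  imports Complex_Main
begin

text \<open>The c-DAG over the dataset {0,...,N-1}, N = 2^(n+1).\<close>

definition cdag_unit :: "nat \<Rightarrow> nat \<Rightarrow> nat \<Rightarrow> real" where
  "cdag_unit n c l = 2 ^ (n + 1 - l) / (real c - 1)"

definition cdag_interval :: "nat \<Rightarrow> nat \<Rightarrow> nat \<Rightarrow> nat \<Rightarrow> real set" where
  "cdag_interval n c l m =
     {real m * cdag_unit n c l ..< real m * cdag_unit n c l + 2 ^ (n + 1 - l)}"

definition cdag_node :: "nat \<Rightarrow> nat \<Rightarrow> nat \<Rightarrow> real set \<Rightarrow> bool" where
  "cdag_node n c l I \<longleftrightarrow> l \<le> n + 1 \<and>
     (\<exists>m. m \<le> (c - 1) * 2 ^ l - (c - 1) \<and> I = cdag_interval n c l m)"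

definition cdag_level :: "nat \<Rightarrow> nat \<Rightarrow> real set \<Rightarrow> nat" where
  "cdag_level n c Q = (GREATEST l. \<exists>I. cdag_node n c l I \<and> Q \<subseteq> I)"

end

theory Submission
  imports Defs
begin

theorem lemma2:
  fixes n \<alpha> :: nat and s x :: real and N :: real and c :: nat and \<kappa> :: int
  assumes "\<alpha> \<ge> 1"
    and "N = 2 ^ (n + 1)"
    and "c = 2 ^ \<alpha> + 1"
    and "1 < s" and "s \<le> N"
    and "\<kappa> = \<lfloor>log 2 (N / s)\<rfloor>"
    and "2 powr (real n - real_of_int \<kappa>) < s"
    and "s \<le> (real c - 2) / (real c - 1) * 2 powr (real n - real_of_int \<kappa> + 1)"
    and "0 \<le> x" and "x \<le> N - s"
  shows "int (cdag_level n c {x..<x + s}) = \<kappa>"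
proof -
  have Npos: "N > 0" using assms(2) by simp
  have "N / s \<ge> 1" using assms(4,5) by simp
  hence "log 2 (N / s) \<ge> 0" by simp
  hence k0: "\<kappa> \<ge> 0" using assms(6) by simp
  have "N / s < N" using assms(4) Npos by (simp add: divide_less_eq)
  hence "log 2 (N / s) < log 2 N" using Npos assms(4) by simp
  also have "log 2 N = real (n+1)" unfolding assms(2) by (rule log_pow_cancel) auto
  finally have "\<kappa> < int (n+1)" using assms(6) by (simp add: floor_less_iff)
  hence kn: "\<kappa> \<le> int n" by simp
  define k where "k = nat \<kappa>"
  have kk: "\<kappa> = int k" using k0 k_def by simp
  have kn': "k \<le> n" using kn kk by simp
  have P: "2 powr (real n - real_of_int \<kappa>) = 2 ^ (n - k)"
  proof -
    have "real n - real_of_int \<kappa> = real (n - k)" using kn' kk by simp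
    thus ?thesis by (simp add: powr_realpow)
  qed
  have Q: "2 powr (real n - real_of_int \<kappa> + 1) = 2 ^ (n + 1 - k)"
  proof -
    have "real n - real_of_int \<kappa> + 1 = real (n + 1 - k)" using kn' kk by simp
    thus ?thesis by (simp add: powr_realpow)
  qed
  define L :: real where "L = 2 ^ (n + 1 - k)"
  have L2: "L = 2 * 2 ^ (n - k)" unfolding L_def using kn' by (simp add: Suc_diff_le)
  have c3: "real c \<ge> 3" using assms(1,3)
  proof -
    have "(2::nat) ^ 1 \<le> 2 ^ \<alpha>" using assms(1) by (rule power_increasing) simp
    hence "c \<ge> 3" using assms(3) by simp
    thus ?thesis by simp
  qed
  define u where "u = L / (real c - 1)"
  have upos: "u > 0" unfolding u_def L_def using c3 by simp
  have Lu: "L = (real c - 1) * u" unfolding u_def using c3 by simp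
  have slow: "s > 2 ^ (n - k)" using assms(7) P by simp
  have sup: "s \<le> (real c - 2) * u"
    using assms(8) Q unfolding u_def L_def by simp
  have kk2: "k + (n+1-k) = n+1" using kn' by simp
  have NL: "N = 2 ^ k * L" unfolding L_def assms(2)
    by (metis kk2 power_add)
  define M where "M = (c - 1) * 2 ^ k - (c - 1)"
  have "real M = (real c - 1) * (2 ^ k - 1)"
  proof -
    have "(c - 1) \<le> (c - 1) * 2 ^ k" by simp
    hence "real M = real ((c-1) * 2^k) - real (c - 1)" unfolding M_def by (simp add: of_nat_diff)
    also have "\<dots> = (real c - 1) * (2 ^ k - 1)" using c3 by (simp add: of_nat_diff algebra_simps)
    finally show ?thesis .
  qed
  hence "real M * u = (2 ^ k - 1) * ((real c - 1) * u)" by simp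
  also have "\<dots> = (2 ^ k - 1) * L" using Lu by simp
  also have "\<dots> = N - L" using NL by (simp add: algebra_simps)
  finally have Mu: "real M * u = N - L" .
  have lev: "\<exists>I. cdag_node n c k I \<and> {x..<x + s} \<subseteq> I"
  proof (cases "nat \<lfloor>x / u\<rfloor> \<le> M")
    case True
    define m where "m = nat \<lfloor>x / u\<rfloor>"
    have fx: "real m = of_int \<lfloor>x / u\<rfloor>" unfolding m_def using assms(9) upos by simp
    have f1: "real m \<le> x / u" "x / u < real m + 1"
      using fx floor_correct[of "x/u"] by auto
    have a1: "real m * u \<le> x"
      using f1(1) upos by (simp add: le_divide_eq)
    have a2: "x < (real m + 1) * u"
      using f1(2) upos by (simp add: divide_less_eq)
    have "x + s \<le> real m * u + L" using a2 sup Lu by (simp add: algebra_simps)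
    hence "{x..<x + s} \<subseteq> cdag_interval n c k m"
      unfolding cdag_interval_def cdag_unit_def using a1 L_def u_def by auto
    moreover have "cdag_node n c k (cdag_interval n c k m)"
      unfolding cdag_node_def using kn' True m_def M_def by auto
    ultimately show ?thesis by blast
  next
    case False
    hence "real M + 1 \<le> of_int \<lfloor>x / u\<rfloor>" by linarith
    hence "real M + 1 \<le> x / u" by linarith
    hence "(real M + 1) * u \<le> x" using upos by (simp add: le_divide_eq)
    hence a1: "real M * u \<le> x" using upos by (simp add: algebra_simps)
    have "x + s \<le> real M * u + L" using Mu assms(10) by simp
    hence "{x..<x + s} \<subseteq> cdag_interval n c k M"
      unfolding cdag_interval_def cdag_unit_def using a1 L_def u_def by auto
    moreover have "cdag_node n c k (cdag_interval n c k M)"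
      unfolding cdag_node_def using kn' M_def by auto
    ultimately show ?thesis by blast
  qed
  have upper: "l \<le> k" if ex: "\<exists>I. cdag_node n c l I \<and> {x..<x + s} \<subseteq> I" for l
  proof (rule ccontr)
    assume "\<not> l \<le> k"
    then obtain I where I: "cdag_node n c l I" "{x..<x + s} \<subseteq> I" using ex by blast
    then obtain m where "I = cdag_interval n c l m" and ln: "l \<le> n + 1"
      unfolding cdag_node_def by blast
    hence "x + s \<le> real m * cdag_unit n c l + 2 ^ (n + 1 - l)"
      using I(2) assms(4) unfolding cdag_interval_def by auto
    moreover have "real m * cdag_unit n c l \<le> x"
      using I(2) assms(4) \<open>I = _\<close> unfolding cdag_interval_def by auto
    ultimately have "s \<le> 2 ^ (n + 1 - l)" by simp
    moreover have "(2::real) ^ (n + 1 - l) \<le> 2 ^ (n - k)"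
      using \<open>\<not> l \<le> k\<close> by (intro power_increasing) auto
    ultimately show False using slow by linarith
  qed
  have "cdag_level n c {x..<x + s} = k"
    unfolding cdag_level_def by (rule Greatest_equality) (use lev upper in auto)
  thus ?thesis using kk by simp
qed

end
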